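(* Let $\mathcal{A}\in\mathbb{R}^{[n_1,\ldots,n_m]}$. Then $\mathcal{A}$ is $\mathbb{R}$-Hermitian decomposable if and only if $\mathcal{A}_{i_1\ldots i_m j_1\ldots j_m}=\mathcal{A}_{k_1\ldots k_m l_1\ldots l_m}$ for all indices such that $\{i_s,j_s\}=\{k_s,l_s\}$ for every $s=1,\ldots,m$.
   Context: For positive integers $n_1,\ldots,n_m$, $\mathbb{R}^{[n_1,\ldots,n_m]}$ denotes the set of real tensors $\mathcal{H}\in\mathbb{R}^{n_1\times\cdots\times n_m\times n_1\times\cdots\times n_m}$ with $\mathcal{H}_{i_1\ldots i_m j_1\ldots j_m}=\mathcal{H}_{j_1\ldots j_m i_1\ldots i_m}$ for all indices (real Hermitian tensors). For vectors $v_i$, $[v_1,\ldots,v_m]_{\otimes h}:=v_1\otimes\cdots\otimes v_m\otimes\overline{v_1}\otimes\cdots\otimes\overline{v_m}$. A tensor $\mathcal{H}\in\mathbb{R}^{[n_1,\ldots,n_m]}$ is called $\mathbb{R}$-Hermitian decomposable if $\mathcal{H}=\sum_{i=1}^r\lambda_i[u_i^1,\ldots,u_i^m]_{\otimes h}$ for some real vectors $u_i^j\in\mathbb{R}^{n_j}$ and real scalars $\lambda_i$. *)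

theory Defs
  imports "HOL-Analysis.Analysis"
begin

(* Order-m dimensions n_1..n_m are given as a list ns of length m.
   A multi-index (i_1,...,i_m) is a nat list of length m with 0-based entries i!s < ns!s.
   A tensor in R^{n_1 x ... x n_m x n_1 x ... x n_m} is a function
   A :: nat list => nat list => real,  A i j = A_{i_1..i_m j_1..j_m};
   only its values at valid multi-indices matter. *)

definition valid_index :: "nat list \<Rightarrow> nat list \<Rightarrow> bool" where
  "valid_index ns i \<longleftrightarrow> length i = length ns \<and> (\<forall>s<length ns. i ! s < ns ! s)"

definition real_hermitian_tensor :: "nat list \<Rightarrow> (nat list \<Rightarrow> nat list \<Rightarrow> real) \<Rightarrow> bool" where
  "real_hermitian_tensor ns A \<longleftrightarrow>
     (\<forall>i j. valid_index ns i \<longrightarrow> valid_index ns j \<longrightarrow> A i j = A j i)"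

(* entry (i,j) of [v_1,...,v_m]_{\<otimes>h} for real vectors v_s (conjugation is trivial);
   v s is the s-th vector (0-based), with components v s 0, ..., v s (n_s - 1) *)
definition hermitian_rank_one :: "nat list \<Rightarrow> (nat \<Rightarrow> nat \<Rightarrow> real) \<Rightarrow> nat list \<Rightarrow> nat list \<Rightarrow> real" where
  "hermitian_rank_one ns v i j = (\<Prod>s<length ns. v s (i ! s)) * (\<Prod>s<length ns. v s (j ! s))"

definition R_hermitian_decomposable :: "nat list \<Rightarrow> (nat list \<Rightarrow> nat list \<Rightarrow> real) \<Rightarrow> bool" where
  "R_hermitian_decomposable ns A \<longleftrightarrow>
     (\<exists>(r::nat) (lam::nat \<Rightarrow> real) (u::nat \<Rightarrow> nat \<Rightarrow> nat \<Rightarrow> real).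
        \<forall>i j. valid_index ns i \<longrightarrow> valid_index ns j \<longrightarrow>
          A i j = (\<Sum>k<r. lam k * hermitian_rank_one ns (u k) i j))"

end

theory Submission
  imports Defs
begin

lemma dec_cong:
  assumes "R_hermitian_decomposable ns F"
    and "\<And>i j. valid_index ns i \<Longrightarrow> valid_index ns j \<Longrightarrow> G i j = F i j"
  shows "R_hermitian_decomposable ns G"
  using assms unfolding R_hermitian_decomposable_def by metis

lemma dec_zero: "R_hermitian_decomposable ns (\<lambda>i j. 0)"
  unfolding R_hermitian_decomposable_def by (rule exI[of _ 0]) simp

lemma sum_split_nat: "(\<Sum>k<r1+(r2::nat). f k) = (\<Sum>k<r1. f k) + (\<Sum>k<r2. (f (r1+k)::real))"
  by (induction r2) (auto simp: add.assoc)

lemma dec_add: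
  assumes "R_hermitian_decomposable ns F" "R_hermitian_decomposable ns G"
  shows "R_hermitian_decomposable ns (\<lambda>i j. F i j + G i j)"
proof -
  obtain r1 :: nat and lam1 u1 where h1: "\<forall>i j. valid_index ns i \<longrightarrow> valid_index ns j \<longrightarrow>
          F i j = (\<Sum>k<r1. lam1 k * hermitian_rank_one ns (u1 k) i j)"
    using assms(1) unfolding R_hermitian_decomposable_def by blast
  obtain r2 :: nat and lam2 u2 where h2: "\<forall>i j. valid_index ns i \<longrightarrow> valid_index ns j \<longrightarrow>
          G i j = (\<Sum>k<r2. lam2 k * hermitian_rank_one ns (u2 k) i j)"
    using assms(2) unfolding R_hermitian_decomposable_def by blast
  define lam where "lam k = (if k < r1 then lam1 k else lam2 (k - r1))" for k
  define u where "u k = (if k < r1 then u1 k else u2 (k - r1))" for k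
  show ?thesis unfolding R_hermitian_decomposable_def
  proof (intro exI[of _ "r1+r2"] exI[of _ lam] exI[of _ u] allI impI)
    fix i j assume v: "valid_index ns i" "valid_index ns j"
    show "F i j + G i j = (\<Sum>k<r1 + r2. lam k * hermitian_rank_one ns (u k) i j)"
      unfolding sum_split_nat using h1 h2 v by (simp add: lam_def u_def)
  qed
qed

lemma dec_scale:
  assumes "R_hermitian_decomposable ns F"
  shows "R_hermitian_decomposable ns (\<lambda>i j. c * F i j)"
proof -
  obtain r :: nat and lam u where h: "\<forall>i j. valid_index ns i \<longrightarrow> valid_index ns j \<longrightarrow>
          F i j = (\<Sum>k<r. lam k * hermitian_rank_one ns (u k) i j)"
    using assms unfolding R_hermitian_decomposable_def by blast
  show ?thesis unfolding R_hermitian_decomposable_def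
    by (intro exI[of _ r] exI[of _ "\<lambda>k. c * lam k"] exI[of _ u])
      (simp add: h sum_distrib_left mult.assoc)
qed

lemma dec_sum:
  assumes "finite S" "\<And>x. x \<in> S \<Longrightarrow> R_hermitian_decomposable ns (F x)"
  shows "R_hermitian_decomposable ns (\<lambda>i j. \<Sum>x\<in>S. F x i j)"
  using assms
proof (induction S rule: finite_induct)
  case empty
  then show ?case using dec_zero by simp
next
  case (insert x S)
  then show ?case using dec_add[of ns "F x" "\<lambda>i j. \<Sum>x\<in>S. F x i j"] by simp
qed

lemma valid_Cons: "valid_index (a#ns) I \<longleftrightarrow> (\<exists>x i. I = x # i \<and> x < a \<and> valid_index ns i)"
proof
  assume "valid_index (a#ns) I"
  then show "\<exists>x i. I = x # i \<and> x < a \<and> valid_index ns i"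
  proof (cases I)
    case Nil
    then show ?thesis using \<open>valid_index (a#ns) I\<close> unfolding valid_index_def by simp
  next
    case (Cons x i)
    have "x < a" using \<open>valid_index (a#ns) I\<close> Cons unfolding valid_index_def by force
    moreover have "valid_index ns i"
      using \<open>valid_index (a#ns) I\<close> Cons unfolding valid_index_def by force
    ultimately show ?thesis using Cons by blast
  qed
next
  assume "\<exists>x i. I = x # i \<and> x < a \<and> valid_index ns i"
  then show "valid_index (a#ns) I"
    unfolding valid_index_def using less_Suc_eq_0_disj by auto
qed

lemma dec_cons:
  assumes "R_hermitian_decomposable ns C"
  shows "R_hermitian_decomposable (a#ns) (\<lambda>I J. v (hd I) * v (hd J) * C (tl I) (tl J))"
proof -
  obtain r :: nat and lam u where h: "\<forall>i j. valid_index ns i \<longrightarrow> valid_index ns j \<longrightarrow>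
          C i j = (\<Sum>k<r. lam k * hermitian_rank_one ns (u k) i j)"
    using assms unfolding R_hermitian_decomposable_def by blast
  define u' where "u' k = (\<lambda>s. if s = 0 then v else u k (s - 1))" for k
  show ?thesis unfolding R_hermitian_decomposable_def
  proof (intro exI[of _ r] exI[of _ lam] exI[of _ u'] allI impI)
    fix I J assume "valid_index (a#ns) I" "valid_index (a#ns) J"
    then obtain x i y j where I: "I = x#i" "valid_index ns i" and J: "J = y#j" "valid_index ns j"
      unfolding valid_Cons by blast
    have r1: "hermitian_rank_one (a#ns) (u' k) (x#i) (y#j) = v x * v y * hermitian_rank_one ns (u k) i j" for k
      unfolding hermitian_rank_one_def u'_def
      by (simp only: length_Cons prod.lessThan_Suc_shift) simp
    show "v (hd I) * v (hd J) * C (tl I) (tl J) =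
        (\<Sum>k<r. lam k * hermitian_rank_one (a # ns) (u' k) I J)"
      using I J h by (simp add: r1 sum_distrib_left mult_ac)
  qed
qed

definition T :: "nat \<Rightarrow> nat \<Rightarrow> nat \<Rightarrow> nat \<Rightarrow> real" where
  "T p q x y = (if p \<le> q \<and> {x, y} = {p, q} then 1 else 0)"

lemma dec_T:
  assumes "R_hermitian_decomposable ns C"
  shows "R_hermitian_decomposable (a#ns) (\<lambda>I J. T p q (hd I) (hd J) * C (tl I) (tl J))"
proof -
  define e where "e (p::nat) (x::nat) = (if x = p then 1 else (0::real))" for p x
  consider "p < q" | "p = q" | "p > q" by linarith
  then show ?thesis
  proof cases
    case 1
    define w where "w x = e p x + e q x" for x
    have d: "R_hermitian_decomposable (a#ns) (\<lambda>I J. w (hd I) * w (hd J) * C (tl I) (tl J)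
       + ((-1) * (e p (hd I) * e p (hd J) * C (tl I) (tl J))
       + (-1) * (e q (hd I) * e q (hd J) * C (tl I) (tl J))))"
      by (intro dec_add dec_scale dec_cons assms)
    show ?thesis
      by (rule dec_cong[OF d]) (use 1 in \<open>auto simp: T_def w_def e_def doubleton_eq_iff\<close>)
  next
    case 2
    have d: "R_hermitian_decomposable (a#ns) (\<lambda>I J. e p (hd I) * e p (hd J) * C (tl I) (tl J))"
      by (intro dec_cons assms)
    show ?thesis
      by (rule dec_cong[OF d]) (use 2 in \<open>auto simp: T_def e_def doubleton_eq_iff\<close>)
  next
    case 3
    show ?thesis
      by (rule dec_cong[OF dec_zero]) (use 3 in \<open>auto simp: T_def\<close>)
  qed
qed

definition symc :: "nat list \<Rightarrow> (nat list \<Rightarrow> nat list \<Rightarrow> real) \<Rightarrow> bool" where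
  "symc ns A \<longleftrightarrow> (\<forall>i j k l. valid_index ns i \<longrightarrow> valid_index ns j \<longrightarrow> valid_index ns k \<longrightarrow> valid_index ns l \<longrightarrow>
       (\<forall>s<length ns. {i ! s, j ! s} = {k ! s, l ! s}) \<longrightarrow> A i j = A k l)"

lemma T_sum:
  fixes g :: "nat \<Rightarrow> nat \<Rightarrow> real"
  assumes "x < a" "y < a"
  shows "(\<Sum>p<a. \<Sum>q<a. T p q x y * g p q) = g (min x y) (max x y)"
proof -
  have "(\<Sum>p<a. \<Sum>q<a. T p q x y * g p q) =
        (\<Sum>p<a. \<Sum>q<a. if q = max x y then (if p = min x y then g p q else 0) else 0)"
    by (intro sum.cong refl) (auto simp: T_def doubleton_eq_iff min_def max_def)
  also have "\<dots> = g (min x y) (max x y)"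
    using assms by (simp add: sum.delta min_def max_def)
  finally show ?thesis .
qed

lemma main:
  "symc ns A \<Longrightarrow> R_hermitian_decomposable ns A"
proof (induction ns arbitrary: A)
  case Nil
  show ?case unfolding R_hermitian_decomposable_def
    by (intro exI[of _ 1] exI[of _ "\<lambda>k. A [] []"] exI[of _ undefined])
       (auto simp: valid_index_def hermitian_rank_one_def)
next
  case (Cons a ns)
  define C where "C p q i j = A (p#i) (q#j)" for p q i j
  have symC: "symc ns (C p q)" if "p < a" "q < a" for p q
    unfolding symc_def C_def
  proof (intro allI impI)
    fix i j k l
    assume v: "valid_index ns i" "valid_index ns j" "valid_index ns k" "valid_index ns l"
      and e: "\<forall>s<length ns. {i ! s, j ! s} = {k ! s, l ! s}"
    have "\<forall>s<length (a#ns). {(p#i) ! s, (q#j) ! s} = {(p#k) ! s, (q#l) ! s}"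
    proof (intro allI impI)
      fix s assume "s < length (a#ns)"
      then show "{(p#i) ! s, (q#j) ! s} = {(p#k) ! s, (q#l) ! s}"
        using e by (cases s) auto
    qed
    then show "A (p # i) (q # j) = A (p # k) (q # l)"
      using Cons.prems v that unfolding symc_def valid_Cons by blast
  qed
  have d: "R_hermitian_decomposable (a#ns)
       (\<lambda>I J. \<Sum>p<a. \<Sum>q<a. T p q (hd I) (hd J) * C p q (tl I) (tl J))"
    by (intro dec_sum dec_T Cons.IH symC) auto
  show ?case
  proof (rule dec_cong[OF d])
    fix I J assume "valid_index (a#ns) I" "valid_index (a#ns) J"
    then obtain x i y j where I: "I = x#i" "x < a" "valid_index ns i"
        and J: "J = y#j" "y < a" "valid_index ns j"
      unfolding valid_Cons by blast
    have s: "(\<Sum>p<a. \<Sum>q<a. T p q x y * C p q i j) = C (min x y) (max x y) i j"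
      using T_sum[OF I(2) J(2), of "\<lambda>p q. C p q i j"] by simp
    have "\<forall>s<length (a#ns). {(x#i) ! s, (y#j) ! s} = {(min x y#i) ! s, (max x y#j) ! s}"
      by (auto simp: less_Suc_eq_0_disj min_def max_def)
    moreover have "valid_index (a#ns) (min x y # i)" "valid_index (a#ns) (max x y # j)"
      using I J unfolding valid_Cons by (auto simp: min_def max_def)
    ultimately have "A (x#i) (y#j) = A (min x y # i) (max x y # j)"
      using Cons.prems I J unfolding symc_def valid_Cons by blast
    then show "A I J = (\<Sum>p<a. \<Sum>q<a. T p q (hd I) (hd J) * C p q (tl I) (tl J))"
      using s I J by (simp add: C_def)
  qed
qed

lemma rank1_sym:
  assumes "valid_index ns i" "valid_index ns j" "\<forall>s<length ns. {i ! s, j ! s} = {k ! s, l ! s}"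
  shows "hermitian_rank_one ns v i j = hermitian_rank_one ns v k l"
proof -
  have "hermitian_rank_one ns v i j = (\<Prod>s<length ns. v s (i ! s) * v s (j ! s))"
    unfolding hermitian_rank_one_def by (simp add: prod.distrib)
  also have "\<dots> = (\<Prod>s<length ns. v s (k ! s) * v s (l ! s))"
  proof (intro prod.cong refl)
    fix s assume "s \<in> {..<length ns}"
    then have "{i ! s, j ! s} = {k ! s, l ! s}" using assms by auto
    then show "v s (i ! s) * v s (j ! s) = v s (k ! s) * v s (l ! s)"
      by (auto simp: doubleton_eq_iff)
  qed
  also have "\<dots> = hermitian_rank_one ns v k l"
    unfolding hermitian_rank_one_def by (simp add: prod.distrib)
  finally show ?thesis .
qed

theorem theorem3p2:
  fixes ns :: "nat list" and A :: "nat list \<Rightarrow> nat list \<Rightarrow> real"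
  assumes "ns \<noteq> []"
    and "\<forall>s<length ns. 0 < ns ! s"
    and "real_hermitian_tensor ns A"
  shows "R_hermitian_decomposable ns A \<longleftrightarrow>
    (\<forall>i j k l. valid_index ns i \<longrightarrow> valid_index ns j \<longrightarrow> valid_index ns k \<longrightarrow> valid_index ns l \<longrightarrow>
       (\<forall>s<length ns. {i ! s, j ! s} = {k ! s, l ! s}) \<longrightarrow> A i j = A k l)"
proof
  assume "R_hermitian_decomposable ns A"
  then obtain r :: nat and lam u where h: "\<forall>i j. valid_index ns i \<longrightarrow> valid_index ns j \<longrightarrow>
          A i j = (\<Sum>k<r. lam k * hermitian_rank_one ns (u k) i j)"
    unfolding R_hermitian_decomposable_def by blast
  show "\<forall>i j k l. valid_index ns i \<longrightarrow> valid_index ns j \<longrightarrow> valid_index ns k \<longrightarrow> valid_index ns l \<longrightarrow>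
       (\<forall>s<length ns. {i ! s, j ! s} = {k ! s, l ! s}) \<longrightarrow> A i j = A k l"
  proof (intro allI impI)
    fix i j k l
    assume v: "valid_index ns i" "valid_index ns j" "valid_index ns k" "valid_index ns l"
      and e: "\<forall>s<length ns. {i ! s, j ! s} = {k ! s, l ! s}"
    show "A i j = A k l"
      using h v rank1_sym[OF v(1,2) e] by simp
  qed
next
  assume "\<forall>i j k l. valid_index ns i \<longrightarrow> valid_index ns j \<longrightarrow> valid_index ns k \<longrightarrow> valid_index ns l \<longrightarrow>
       (\<forall>s<length ns. {i ! s, j ! s} = {k ! s, l ! s}) \<longrightarrow> A i j = A k l"
  then show "R_hermitian_decomposable ns A" using main unfolding symc_def by blast
qed

end
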